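(* Assume $N\ge3$. If $M>0$ and $1<p\le\frac{N+2}{N-2}$, system (S) admits no closed orbit (nonconstant periodic trajectory) contained in the closed quadrant $\{x\ge0,y\ge0\}$. If $p>\frac{N+2}{N-2}$ and $0<M\le\overline M$, system (S) admits no cycle in the open quadrant $\{x>0,y>0\}$ surrounding $P_M$.
   Context: Let $K=\frac{(N-2)p-N}{p-1}$. System (S) is $x_t=\frac{2}{p-1}x-y$, $y_t=-Ky+|x|^{p-1}x+M|y|^{\frac{2p}{p+1}}$. For $p>\frac{N}{N-2}$, $M\ge0$, $X_M$ is the unique positive root of $X^{p-1}+M\left(\frac{2}{p-1}\right)^{\frac{2p}{p+1}}X^{\frac{p-1}{p+1}}-\frac{2K}{p-1}=0$ and $P_M=(X_M,\frac{2}{p-1}X_M)$. $\overline M=\frac{(p+1)((N-2)p-N-2)}{(4p)^{\frac{p}{p+1}}((N-2)(p-1)^2+4)^{\frac{1}{p+1}}}$. A cycle surrounding $P_M$ is a nonconstant periodic orbit whose bounded complementary region contains $P_M$. *)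

theory Defs
  imports "HOL-Analysis.Analysis"
begin

definition Kc :: "nat \<Rightarrow> real \<Rightarrow> real" where
  "Kc N p = ((real N - 2) * p - real N) / (p - 1)"

definition fS :: "nat \<Rightarrow> real \<Rightarrow> real \<Rightarrow> real \<Rightarrow> real \<Rightarrow> real" where
  "fS N p M x y = 2 / (p - 1) * x - y"

definition gS :: "nat \<Rightarrow> real \<Rightarrow> real \<Rightarrow> real \<Rightarrow> real \<Rightarrow> real" where
  "gS N p M x y = - Kc N p * y + \<bar>x\<bar> powr (p - 1) * x + M * \<bar>y\<bar> powr (2 * p / (p + 1))"

definition solS :: "nat \<Rightarrow> real \<Rightarrow> real \<Rightarrow> (real \<Rightarrow> real) \<Rightarrow> (real \<Rightarrow> real) \<Rightarrow> bool" where
  "solS N p M x y \<longleftrightarrow>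
     (\<forall>t. (x has_real_derivative fS N p M (x t) (y t)) (at t) \<and>
          (y has_real_derivative gS N p M (x t) (y t)) (at t))"

definition closed_orbitS :: "nat \<Rightarrow> real \<Rightarrow> real \<Rightarrow> (real \<Rightarrow> real) \<Rightarrow> (real \<Rightarrow> real) \<Rightarrow> bool" where
  "closed_orbitS N p M x y \<longleftrightarrow>
     solS N p M x y \<and>
     (\<exists>T>0. \<forall>t. x (t + T) = x t \<and> y (t + T) = y t) \<and>
     (\<exists>s t. (x s, y s) \<noteq> (x t, y t))"

definition orbit_set :: "(real \<Rightarrow> real) \<Rightarrow> (real \<Rightarrow> real) \<Rightarrow> (real \<times> real) set" where
  "orbit_set x y = range (\<lambda>t. (x t, y t))"

definition surrounds :: "(real \<times> real) set \<Rightarrow> real \<times> real \<Rightarrow> bool" where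
  "surrounds \<Gamma> P \<longleftrightarrow> P \<notin> \<Gamma> \<and> bounded (connected_component_set (- \<Gamma>) P)"

definition XM :: "nat \<Rightarrow> real \<Rightarrow> real \<Rightarrow> real" where
  "XM N p M = (THE X. X > 0 \<and>
      X powr (p - 1) + M * (2 / (p - 1)) powr (2 * p / (p + 1)) * X powr ((p - 1) / (p + 1))
        - 2 * Kc N p / (p - 1) = 0)"

definition PM :: "nat \<Rightarrow> real \<Rightarrow> real \<Rightarrow> real \<times> real" where
  "PM N p M = (XM N p M, 2 / (p - 1) * XM N p M)"

definition Mbar :: "nat \<Rightarrow> real \<Rightarrow> real" where
  "Mbar N p = (p + 1) * ((real N - 2) * p - real N - 2) /
     ((4 * p) powr (p / (p + 1)) * ((real N - 2) * (p - 1)^2 + 4) powr (1 / (p + 1)))"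

end

theory Submission
  imports Defs
begin

lemma periodic_deriv_zero:
  fixes \<phi> d :: "real \<Rightarrow> real"
  assumes der: "\<And>t. (\<phi> has_real_derivative d t) (at t)"
    and nn: "\<And>t. d t \<ge> 0" and T: "T > 0" and per: "\<And>t. \<phi> (t + T) = \<phi> t"
  shows "d t = 0"
proof (rule ccontr)
  assume "d t \<noteq> 0"
  with nn[of t] have "d t > 0" by linarith
  from DERIV_pos_inc_right[OF der this] obtain \<delta> where \<delta>: "\<delta> > 0"
    "\<And>h. h > 0 \<Longrightarrow> h < \<delta> \<Longrightarrow> \<phi> t < \<phi> (t + h)" by blast
  define h where "h = min (\<delta>/2) (T/2)"
  have h: "h > 0" "h < \<delta>" "h \<le> T" using \<delta> T by (auto simp: h_def)
  have "\<phi> t < \<phi> (t + h)" using \<delta>(2) h by auto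
  also have "\<phi> (t + h) \<le> \<phi> (t + T)"
    by (rule DERIV_nonneg_imp_nondecreasing[of "t+h" "t+T"]) (use h der nn in auto)
  also have "\<dots> = \<phi> t" by (rule per)
  finally show False by simp
qed

lemma abs_powr_deriv:
  fixes r s :: real
  assumes r: "r > 0"
  shows "((\<lambda>s. \<bar>s\<bar> powr (r + 1) / (r + 1)) has_real_derivative \<bar>s\<bar> powr (r - 1) * s) (at s)"
proof (cases "s = 0")
  case True
  have lim: "((\<lambda>h. \<bar>h\<bar> powr r / (r + 1)) \<longlongrightarrow> 0) (at (0::real))"
  proof -
    have "((\<lambda>h. \<bar>h\<bar> powr r) \<longlongrightarrow> 0) (at (0::real))"
      by (rule tendsto_zero_powrI) (use r in \<open>auto intro!: tendsto_eq_intros\<close>)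
    then show ?thesis by (rule tendsto_divide_zero)
  qed
  have "((\<lambda>h. (\<bar>0 + h\<bar> powr (r + 1) / (r + 1) - \<bar>0::real\<bar> powr (r + 1) / (r + 1)) / h) \<longlongrightarrow> 0) (at 0)"
  proof (rule tendsto_norm_zero_cancel)
    have ev: "\<forall>\<^sub>F h in at (0::real). \<bar>h\<bar> powr r / (r + 1) = norm ((\<bar>0 + h\<bar> powr (r + 1) / (r + 1) - \<bar>0::real\<bar> powr (r + 1) / (r + 1)) / h)"
      unfolding eventually_at_filter
      using r by (auto simp: powr_add abs_mult)
    then show "((\<lambda>h. norm ((\<bar>0 + h\<bar> powr (r + 1) / (r + 1) - \<bar>0::real\<bar> powr (r + 1) / (r + 1)) / h)) \<longlongrightarrow> 0) (at 0)"
      using tendsto_cong[OF ev] lim by blast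
  qed
  then show ?thesis using True by (simp add: DERIV_def)
next
  case False
  have eq: "(\<lambda>s. \<bar>s\<bar> powr (r + 1) / (r + 1)) = (\<lambda>s. (s * s) powr ((r + 1) / 2) / (r + 1))"
  proof
    fix s :: real
    have e: "s * s = \<bar>s\<bar> powr 2" by (cases "s = 0") (auto simp: powr_numeral power2_eq_square[symmetric])
    show "\<bar>s\<bar> powr (r + 1) / (r + 1) = (s * s) powr ((r + 1) / 2) / (r + 1)"
    proof -
      have h2: "2 * ((r + 1) / 2) = r + 1" by simp
      show ?thesis unfolding e powr_powr h2 by (rule refl)
    qed
  qed
  have ss: "s * s > 0" using False not_real_square_gt_zero by blast
  have "((\<lambda>s. (s * s) powr ((r + 1) / 2) / (r + 1)) has_real_derivative
        ((r + 1) / 2) * (s * s) powr ((r + 1) / 2 - 1) * (s + s) / (r + 1)) (at s)"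
    using ss by (auto intro!: derivative_eq_intros)
  moreover have "((r + 1) / 2) * (s * s) powr ((r + 1) / 2 - 1) * (s + s) / (r + 1) = \<bar>s\<bar> powr (r - 1) * s"
  proof -
    have e: "s * s = \<bar>s\<bar> powr 2" using False by (auto simp: powr_numeral power2_eq_square[symmetric])
    have h2: "2 * ((r + 1) / 2 - 1) = r - 1" by simp
    have "(s * s) powr ((r + 1) / 2 - 1) = \<bar>s\<bar> powr (r - 1)" unfolding e powr_powr h2 by (rule refl)
    then show ?thesis using r by (simp add: field_simps)
  qed
  ultimately show ?thesis unfolding eq by simp
qed

lemma absq_eq: "(s::real) \<ge> 0 \<Longrightarrow> \<bar>s\<bar> powr (r - 1) * s = s powr r"
  by (cases "s = 0") (auto simp: powr_diff)

lemma part1: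
  fixes N :: nat and p M :: real and x y :: "real \<Rightarrow> real"
  assumes N3: "N \<ge> 3" and M: "M > 0" and p1: "1 < p" and pc: "p \<le> (real N + 2) / (real N - 2)"
    and co: "closed_orbitS N p M x y" and nn: "\<forall>t. x t \<ge> 0 \<and> y t \<ge> 0"
  shows False
proof -
  define a where "a = 2 / (p - 1)"
  define K where "K = Kc N p"
  define q where "q = 2 * p / (p + 1)"
  have a0: "a > 0" using p1 by (simp add: a_def)
  have q1: "q > 1" using p1 by (simp add: q_def field_simps)
  have N2: "real N - 2 > 0" using N3 by simp
  have "p * (real N - 2) \<le> real N + 2" using pc N2 by (simp add: le_divide_eq)
  then have aK: "a - K \<ge> 0" using p1
    by (simp add: a_def K_def Kc_def field_simps diff_divide_distrib[symmetric] divide_nonneg_pos)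
  from co obtain T where T: "T > 0" "\<forall>t. x (t + T) = x t \<and> y (t + T) = y t"
    and sol: "solS N p M x y" and nc: "\<exists>s t. (x s, y s) \<noteq> (x t, y t)"
    unfolding closed_orbitS_def by blast
  have dx: "\<And>t. (x has_real_derivative (a * x t - y t)) (at t)"
    using sol unfolding solS_def fS_def a_def by blast
  have dy: "\<And>t. (y has_real_derivative (- K * y t + \<bar>x t\<bar> powr (p - 1) * x t + M * \<bar>y t\<bar> powr q)) (at t)"
    using sol unfolding solS_def gS_def K_def q_def by blast
  define u where "u t = a * x t - y t" for t
  define d where "d t = (a - K) * (u t)^2 + M * u t * ((a * x t) powr q - (y t) powr q)" for t
  define P1 where "P1 t = \<bar>x t\<bar> powr (p + 1) / (p + 1)" for t
  define P2 where "P2 t = \<bar>a * x t\<bar> powr (q + 1) / (q + 1)" for t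
  define \<phi> where "\<phi> t = (a * x t - y t)^2 / 2 + P1 t - a * K * (x t)^2 / 2 + M / a * P2 t" for t
  have der: "(\<phi> has_real_derivative d t) (at t)" for t
  proof -
    have d1: "(P1 has_real_derivative (\<bar>x t\<bar> powr (p - 1) * x t) * (a * x t - y t)) (at t)"
      using DERIV_chain2[OF abs_powr_deriv[of p "x t"] dx[of t]] p1 by (simp add: P1_def[abs_def])
    have d2: "(P2 has_real_derivative (\<bar>a * x t\<bar> powr (q - 1) * (a * x t)) * (a * (a * x t - y t))) (at t)"
      using DERIV_chain2[OF abs_powr_deriv[of q "a * x t"] DERIV_cmult[OF dx[of t], of a]] q1 by (simp add: P2_def[abs_def])
    show ?thesis
      unfolding \<phi>_def[abs_def]
      apply (rule derivative_eq_intros d1 d2 dx dy refl | (simp; fail))+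
      subgoal
      proof -
        have e1: "\<bar>a * x t\<bar> powr (q - 1) * (a * x t) = (a * x t) powr q"
          using absq_eq[of "a * x t" q] nn a0 by simp
        have e2: "\<bar>y t\<bar> = y t" using nn by simp
        show ?thesis unfolding d_def u_def e1 e2 using a0
          by (simp add: power2_eq_square field_simps)
      qed
      done
  qed
  have per: "\<phi> (t + T) = \<phi> t" for t using T(2) by (simp add: \<phi>_def P1_def P2_def)
  have dnn: "d t \<ge> 0 \<and> (d t = 0 \<longrightarrow> u t = 0)" for t
  proof -
    have y0: "y t \<ge> 0" and x0: "a * x t \<ge> 0" using nn a0 by auto
    have A: "u t * ((a * x t) powr q - (y t) powr q) \<ge> 0 \<and> (u t \<noteq> 0 \<longrightarrow> u t * ((a * x t) powr q - (y t) powr q) > 0)"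
    proof (cases "u t > 0")
      case True
      then have "y t < a * x t" by (simp add: u_def)
      then have "(y t) powr q < (a * x t) powr q" using powr_less_mono2[of q "y t" "a * x t"] q1 y0 by simp
      then show ?thesis using True by (simp add: mult_pos_pos)
    next
      case False
      show ?thesis
      proof (cases "u t = 0")
        case True then show ?thesis by simp
      next
        case F2: False
        with False have "u t < 0" by simp
        then have "a * x t < y t" by (simp add: u_def)
        then have "(a * x t) powr q < (y t) powr q" using powr_less_mono2[of q "a * x t" "y t"] q1 x0 by simp
        then have "u t * ((a * x t) powr q - (y t) powr q) > 0" using \<open>u t < 0\<close> by (intro mult_neg_neg) auto
        then show ?thesis by simp
      qed
    qed
    have B: "(a - K) * (u t)^2 \<ge> 0" using aK by simp
    have "d t = (a - K) * (u t)^2 + M * (u t * ((a * x t) powr q - (y t) powr q))"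
      by (simp add: d_def)
    then show ?thesis using A B M
      by (smt (verit) mult_pos_pos mult_nonneg_nonneg)
  qed
  have d0: "d t = 0" for t
    by (rule periodic_deriv_zero[OF der _ T(1) per]) (use dnn in auto)
  have u0: "u t = 0" for t using dnn d0 by blast
  have "\<forall>t. (x has_real_derivative 0) (at t)" using dx u0 by (simp add: u_def)
  then have xc: "x s = x t" for s t by (rule DERIV_isconst_all)
  have yc: "y s = y t" for s t using u0[of s] u0[of t] xc[of s t] by (simp add: u_def)
  show False using nc xc yc by auto
qed


lemma consts2:
  fixes N :: nat and p :: real
  assumes N3: "N \<ge> 3" and pc: "p > (real N + 2) / (real N - 2)"
  fixes n a K q m D Z \<alpha> b :: real
  assumes n_def: "n = real N - 2" and a_def: "a = 2 / (p - 1)" and K_def: "K = Kc N p" and q_def: "q = 2 * p / (p + 1)"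
    and m_def: "m = n * (p - 1) - 4" and D_def: "D = n * (p - 1)^2 + 4" and Z_def: "Z = (p + 1) * n * (p - 1)"
    and \<alpha>_def: "\<alpha> = m * D / (2 * Z)" and b_def: "b = 2 * m / Z"
  shows "p > 1" "n > 0" "m > 0" "D > 0" "Z > 0" "\<alpha> > 0" "b > 0" "b < 1" "a > 0"
    "a * (\<alpha> + 1) = K * (1 - b)" "q - b = 2 * D / Z" "p * b / \<alpha> = 4 * p / D"
    "Mbar N p = (p + 1) * m / ((4 * p) powr (p / (p + 1)) * D powr (1 / (p + 1)))"
    "Mbar N p * (q - b) * (4 * p / D) powr (p / (p + 1)) = (p + 1) * b"
proof -
  show n0: "n > 0" using N3 by (simp add: n_def)
  have "p * n > real N + 2" using pc n0 by (simp add: n_def divide_less_eq)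
  then have pn: "p * n > n + 4" by (simp add: n_def)
  show p1: "p > 1"
  proof (rule ccontr)
    assume "\<not> p > 1" then have "p * n \<le> 1 * n" using n0 by (intro mult_right_mono) auto
    then show False using pn by simp
  qed
  show m0: "m > 0" using pn by (simp add: m_def algebra_simps)
  show D0: "D > 0" using n0 unfolding D_def by (intro add_nonneg_pos) auto
  show Z0: "Z > 0" using n0 p1 by (simp add: Z_def)
  show "\<alpha> > 0" using m0 D0 Z0 by (simp add: \<alpha>_def)
  show "b > 0" using m0 Z0 by (simp add: b_def)
  have "Z - 2 * m = n * (p - 1)^2 + 8" unfolding Z_def m_def by (simp add: algebra_simps power2_eq_square)
  moreover have "n * (p - 1)^2 \<ge> 0" using n0 by simp
  ultimately have "2 * m < Z" by linarith
  then show "b < 1" using Z0 by (simp add: b_def)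
  show "a > 0" using p1 by (simp add: a_def)
  have Ka: "K = n - a" using p1 by (simp add: K_def Kc_def n_def a_def field_simps)
  have poly: "m * D + 2 * Z = (n * (p - 1) - 2) * (Z - 2 * m)"
    unfolding m_def D_def Z_def by (simp add: algebra_simps power2_eq_square)
  have e1: "a * (\<alpha> + 1) = (m * D + 2 * Z) / ((p - 1) * Z)"
    using p1 Z0 by (simp add: a_def \<alpha>_def field_simps)
  have e2: "K * (1 - b) = (n * (p - 1) - 2) * (Z - 2 * m) / ((p - 1) * Z)"
    using p1 Z0 by (simp add: Ka a_def b_def field_simps)
  show "a * (\<alpha> + 1) = K * (1 - b)" using e1 e2 poly by simp
  have nz1: "p + 1 \<noteq> 0" "p - 1 \<noteq> 0" "n \<noteq> 0" using p1 n0 by auto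
  have "q * Z = 2 * p * n * (p - 1)" using nz1 unfolding q_def Z_def by simp
  then have e3: "q = 2 * p * n * (p - 1) / Z" using Z0 by (simp add: eq_divide_eq)
  have poly2: "2 * p * n * (p - 1) - 2 * m = 2 * D" unfolding m_def D_def by (simp add: algebra_simps power2_eq_square)
  show "p * b / \<alpha> = 4 * p / D" using p1 n0 m0 D0 Z0
    by (simp add: b_def \<alpha>_def field_simps)
  show qb: "q - b = 2 * D / Z" unfolding e3 b_def using Z0 poly2 by (simp add: diff_divide_distrib[symmetric])
  show MB: "Mbar N p = (p + 1) * m / ((4 * p) powr (p / (p + 1)) * D powr (1 / (p + 1)))"
    unfolding Mbar_def m_def D_def n_def by (simp add: algebra_simps)
  have ex: "1 / (p + 1) + p / (p + 1) = 1" using nz1 by (simp add: add_divide_distrib[symmetric])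
  have DD: "D powr (1 / (p + 1)) * D powr (p / (p + 1)) = D"
    unfolding powr_add[symmetric] ex using D0 by simp
  have A0: "(4 * p) powr (p / (p + 1)) > 0" using p1 by simp
  have D1: "D powr (1 / (p + 1)) > 0" "D powr (p / (p + 1)) > 0" using D0 by auto
  have "Mbar N p * (q - b) * (4 * p / D) powr (p / (p + 1))
      = (p + 1) * m / ((4 * p) powr (p / (p + 1)) * D powr (1 / (p + 1))) * (2 * D / Z)
        * ((4 * p) powr (p / (p + 1)) / D powr (p / (p + 1)))"
    unfolding MB qb using p1 D0 by (simp add: powr_divide)
  also have "\<dots> = (p + 1) * (2 * m) * D / (Z * (D powr (1 / (p + 1)) * D powr (p / (p + 1))))"
    using A0 D1 Z0 by (simp add: field_simps)
  also have "\<dots> = (p + 1) * b" unfolding DD b_def using D0 Z0 by simp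
  finally show "Mbar N p * (q - b) * (4 * p / D) powr (p / (p + 1)) = (p + 1) * b" .
qed

lemma bern_strict:
  fixes t l :: real
  assumes t: "t > 0" "t \<noteq> 1" and l: "0 < l" "l < 1"
  shows "t powr l < l * t + (1 - l)"
proof -
  define g where "g s = l * s + (1 - l) - s powr l" for s
  have dg: "(g has_real_derivative (l - l * s powr (l - 1))) (at s)" if "s > 0" for s
    unfolding g_def[abs_def] using that by (auto intro!: derivative_eq_intros)
  have cont: "continuous_on {u..v} g" if "u > 0" for u v
  proof (intro continuous_at_imp_continuous_on ballI)
    fix s assume "s \<in> {u..v}"
    then have "s > 0" using that by auto
    then show "isCont g s" by (rule DERIV_isCont[OF dg])
  qed
  have g1: "g 1 = 0" by (simp add: g_def)
  show ?thesis
  proof (cases "t > 1")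
    case True
    have "g 1 < g t"
    proof (rule DERIV_pos_imp_increasing_open[OF True])
      fix s assume s: "1 < s" "s < t"
      have "s powr (l - 1) < 1" using s l by (simp add: powr_less_one)
      then have "l - l * s powr (l - 1) > 0" using l by simp
      moreover have "DERIV g s :> (l - l * s powr (l - 1))" using s by (intro dg) auto
      ultimately show "\<exists>y. DERIV g s :> y \<and> y > 0" by blast
    qed (rule cont, simp)
    then show ?thesis using g1 by (simp add: g_def)
  next
    case False
    then have tl: "t < 1" using t by simp
    have "g t > g 1"
    proof (rule DERIV_neg_imp_decreasing_open[OF tl])
      fix s assume s: "t < s" "s < 1"
      have "s powr (l - 1) > 1" using powr_less_mono2_neg[of "l - 1" s 1] s t l by simp
      then have "l - l * s powr (l - 1) < 0" using l by simp
      moreover have "DERIV g s :> (l - l * s powr (l - 1))" using s t by (intro dg) auto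
      ultimately show "\<exists>y. DERIV g s :> y \<and> y < 0" by blast
    qed (rule cont, rule t)
    then show ?thesis using g1 by (simp add: g_def)
  qed
qed

lemma strict_dec:
  fixes g g' :: "real \<Rightarrow> real"
  assumes der: "\<And>y. y > 0 \<Longrightarrow> (g has_real_derivative g' y) (at y)"
    and neg: "\<And>y. y > 0 \<Longrightarrow> y \<noteq> yz \<Longrightarrow> g' y < 0"
    and y: "0 < ya" "ya < yb"
  shows "g yb < g ya"
proof -
  have cont: "continuous_on {u..v} g" if "u > 0" for u v
  proof (intro continuous_at_imp_continuous_on ballI)
    fix s assume "s \<in> {u..v}"
    then have "s > 0" using that by auto
    then show "isCont g s" by (rule DERIV_isCont[OF der])
  qed
  have dec: "g v < g u" if "0 < u" "u < v" "\<not> (u < yz \<and> yz < v)" for u v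
  proof (rule DERIV_neg_imp_decreasing_open[OF that(2)])
    fix s assume s: "u < s" "s < v"
    then have "s \<noteq> yz" using that by auto
    then show "\<exists>y. DERIV g s :> y \<and> y < 0" using der neg s that by (meson order.strict_trans)
  qed (rule cont, rule that)
  show ?thesis
  proof (cases "ya < yz \<and> yz < yb")
    case True
    then have "g yz < g ya" "g yb < g yz" using y by (auto intro!: dec)
    then show ?thesis by simp
  next
    case False then show ?thesis using y dec by auto
  qed
qed


lemma keyineq:
  fixes X Y p q b \<alpha> Mb M D :: real
  assumes X: "X > 0" and Y: "Y > 0" and p: "p > 1" and q: "q = 2 * p / (p + 1)"
    and \<alpha>: "\<alpha> > 0" and b: "b > 0" and D: "D > 0" and qb: "q - b > 0"
    and r1: "p * b / \<alpha> = 4 * p / D"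
    and r2: "Mb * (q - b) * (4 * p / D) powr (p / (p + 1)) = (p + 1) * b"
    and M: "0 < M" "M \<le> Mb"
  shows "M * (q - b) * (Y powr q / Y) \<le> \<alpha> * Y / X + b * X powr p / Y"
    and "\<alpha> * Y^2 \<noteq> p * b * X powr (p + 1) \<Longrightarrow> M * (q - b) * (Y powr q / Y) < \<alpha> * Y / X + b * X powr p / Y"
proof -
  define l where "l = p / (p + 1)"
  have l: "0 < l" "l < 1" using p by (auto simp: l_def)
  define t where "t = \<alpha> * Y^2 / (p * b * X powr (p + 1))"
  have t0: "t > 0" using X Y p \<alpha> b by (simp add: t_def)
  have Xp1: "X powr (p + 1) = X powr p * X" using X by (simp add: powr_add)
  have c1: "4 * p / D * t = Y^2 / X powr (p + 1)"
    unfolding r1[symmetric] t_def using \<alpha> b p X by (simp add: field_simps)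
  have Y2: "Y^2 = Y powr 2" using Y by simp
  have c2: "(Y^2 / X powr (p + 1)) powr l = Y powr q / X powr p"
  proof -
    have "(Y^2 / X powr (p + 1)) powr l = (Y powr 2) powr l / (X powr (p + 1)) powr l"
      unfolding Y2 using X Y by (simp add: powr_divide)
    also have "\<dots> = Y powr (2 * l) / X powr ((p + 1) * l)" by (simp add: powr_powr)
    also have "2 * l = q" using p by (simp add: l_def q)
    also have "(p + 1) * l = p" using p by (simp add: l_def)
    finally show ?thesis .
  qed
  have Yq: "Y powr q = (4 * p / D) powr l * t powr l * X powr p"
  proof -
    have "Y powr q = (Y^2 / X powr (p + 1)) powr l * X powr p" using c2 X by simp
    also have "\<dots> = (4 * p / D * t) powr l * X powr p" unfolding c1 ..
    also have "\<dots> = (4 * p / D) powr l * t powr l * X powr p"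
      using powr_mult[of "4 * p / D" t l] p D t0 by simp
    finally show ?thesis .
  qed
  define G where "G = (q - b) * (4 * p / D) powr l"
  have G0: "G > 0" using qb p D by (simp add: G_def)
  have MbG: "Mb * G = (p + 1) * b" using r2 by (simp add: G_def l_def mult.assoc)
  have MG: "M * G \<le> (p + 1) * b" using mult_right_mono[OF M(2) less_imp_le[OF G0]] MbG by simp
  have lhs: "M * (q - b) * (Y powr q / Y) = M * G * (t powr l * X powr p / Y)"
    unfolding Yq G_def using Y by (simp add: field_simps)
  have P: "t powr l * X powr p / Y > 0" using t0 X Y by simp
  have rhs: "\<alpha> * Y / X + b * X powr p / Y = b * (p * t + 1) * (X powr p / Y)"
    unfolding t_def Xp1 using X Y p b \<alpha> by (simp add: field_simps power2_eq_square)
  have bern_le: "t powr l \<le> l * t + (1 - l)"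
    using bern_strict[OF t0 _ l] by (cases "t = 1") (auto simp: less_imp_le)
  have ptl: "(p + 1) * (l * t + (1 - l)) = p * t + 1" using p by (simp add: l_def field_simps)
  have step1: "M * G * (t powr l * X powr p / Y) \<le> (p + 1) * b * (t powr l * X powr p / Y)"
    using mult_right_mono[OF MG less_imp_le[OF P]] by simp
  have step2: "(p + 1) * b * (t powr l * X powr p / Y) \<le> b * (p * t + 1) * (X powr p / Y)"
  proof -
    have "(p + 1) * t powr l \<le> (p + 1) * (l * t + (1 - l))" using bern_le p by (intro mult_left_mono) auto
    then have A: "(p + 1) * t powr l \<le> p * t + 1" using ptl by simp
    have W: "X powr p / Y > 0" using X Y by simp
    have "b * ((p + 1) * t powr l) * (X powr p / Y) \<le> b * (p * t + 1) * (X powr p / Y)"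
      using A b W by (intro mult_right_mono mult_left_mono) auto
    moreover have "(p + 1) * b * (t powr l * X powr p / Y) = b * ((p + 1) * t powr l) * (X powr p / Y)"
      using Y by (simp add: field_simps)
    ultimately show ?thesis by linarith
  qed
  show "M * (q - b) * (Y powr q / Y) \<le> \<alpha> * Y / X + b * X powr p / Y"
    unfolding lhs rhs using step1 step2 by linarith
  assume ne: "\<alpha> * Y^2 \<noteq> p * b * X powr (p + 1)"
  have "t \<noteq> 1" using ne p b X by (auto simp: t_def)
  then have "t powr l < l * t + (1 - l)" using bern_strict[OF t0 _ l] by simp
  then have "(p + 1) * t powr l < (p + 1) * (l * t + (1 - l))" using p by (intro mult_strict_left_mono) auto
  then have A: "(p + 1) * t powr l < p * t + 1" using ptl by simp
  have W: "X powr p / Y > 0" using X Y by simp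
  have "b * ((p + 1) * t powr l) * (X powr p / Y) < b * (p * t + 1) * (X powr p / Y)"
    using A b W by (intro mult_strict_right_mono mult_strict_left_mono) auto
  moreover have "(p + 1) * b * (t powr l * X powr p / Y) = b * ((p + 1) * t powr l) * (X powr p / Y)"
    using Y by (simp add: field_simps)
  ultimately have step2': "(p + 1) * b * (t powr l * X powr p / Y) < b * (p * t + 1) * (X powr p / Y)"
    by linarith
  show "M * (q - b) * (Y powr q / Y) < \<alpha> * Y / X + b * X powr p / Y"
    unfolding lhs rhs using step1 step2' by linarith
qed


lemma pm1': "(z::real) > 0 \<Longrightarrow> z powr (r - 1) = z powr r * inverse z"
  by (simp add: powr_diff divide_inverse)

lemma Vderiv:
  fixes x y :: "real \<Rightarrow> real" and t a K M p q \<alpha> \<beta> c2 k i1 i2 j1 j2 j3 :: real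
  assumes xpos: "x t > 0" and ypos: "y t > 0" and a0: "a > 0"
    and dx: "(x has_real_derivative (a * x t - y t)) (at t)"
    and dy: "(y has_real_derivative (- K * y t + x t powr p + M * y t powr q)) (at t)"
    and C0: "K * (\<beta> + 1) = a * (\<alpha> + 1)" and c2: "c2 * (\<beta> + 2) = \<alpha>" and k: "k = - c2 * a^2"
    and i: "i1 * (\<beta> + 1) = 1" "i2 * (\<beta> + 2) = 1"
    and j: "j1 * (\<alpha> + \<beta> + 2) = 1" "j2 * (\<alpha> + \<beta> + p + 1) = 1" "j3 * (\<alpha> + \<beta> + q + 1) = 1"
  shows "((\<lambda>t. x t powr \<alpha> * y t powr \<beta> * (a * x t * y t * i1 - (y t)^2 * i2)
           - a powr \<beta> * (x t powr \<alpha> * x t powr \<beta> * (k * (x t)^2 * j1 + x t powr p * x t * j2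
               + M * a powr q * x t powr q * x t * j3)))
        has_real_derivative
          (a * x t - y t) * (x t powr \<alpha> * y t powr \<beta> * (- c2 * (y t)^2 * inverse (x t) + x t powr p + M * y t powr q)
             - a powr \<beta> * (x t powr \<alpha> * x t powr \<beta> * (k * x t + x t powr p + M * a powr q * x t powr q)))) (at t)"
proof -
  have ix: "x t * inverse (x t) = 1" "y t * inverse (y t) = 1" using xpos ypos by auto
  have e2: "\<And>z::real. z ^ (2 - Suc 0) = z" by simp
  have e3: "real 2 = 2" by simp
  show ?thesis
    apply (rule derivative_eq_intros dx dy xpos ypos a0 refl | (simp; fail))+
    unfolding pm1'[OF xpos] pm1'[OF ypos] e2 e3
    using ix C0 c2 k i j by algebra
qed


lemma hderiv:
  fixes X Y \<alpha> \<beta> b c2 M p q :: real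
  assumes X: "X > 0" and Y: "Y > 0" and c2: "c2 * (\<beta> + 2) = \<alpha>" and \<beta>: "\<beta> = - b"
  shows "((\<lambda>Y. X powr \<alpha> * Y powr \<beta> * (- c2 * Y^2 * inverse X + X powr p + M * Y powr q)) has_real_derivative
     X powr \<alpha> * Y powr \<beta> * (- \<alpha> * Y * inverse X - b * X powr p * inverse Y + M * (q - b) * (Y powr q * inverse Y))) (at Y)"
proof -
  have ix: "X * inverse X = 1" "Y * inverse Y = 1" using X Y by auto
  have e2: "\<And>z::real. z ^ (2 - Suc 0) = z" by simp
  have e3: "real 2 = 2" by simp
  show ?thesis
    apply (rule derivative_eq_intros Y refl | (simp; fail))+
    unfolding pm1'[OF Y] e2 e3
    using ix c2 \<beta> by algebra
qed


lemma part2: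
  fixes N :: nat and p M :: real and x y :: "real \<Rightarrow> real"
  assumes N3: "N \<ge> 3" and pc: "p > (real N + 2) / (real N - 2)" and M: "0 < M" "M \<le> Mbar N p"
    and co: "closed_orbitS N p M x y" and pos: "\<forall>t. x t > 0 \<and> y t > 0"
  shows False
proof -
  define n where "n = real N - 2"
  define a where "a = 2 / (p - 1)"
  define K where "K = Kc N p"
  define q where "q = 2 * p / (p + 1)"
  define m where "m = n * (p - 1) - 4"
  define D where "D = n * (p - 1)^2 + 4"
  define Z where "Z = (p + 1) * n * (p - 1)"
  define \<alpha> where "\<alpha> = m * D / (2 * Z)"
  define b where "b = 2 * m / Z"
  note C = consts2[OF N3 pc n_def a_def K_def q_def m_def D_def Z_def \<alpha>_def b_def]
  have p1: "p > 1" and \<alpha>0: "\<alpha> > 0" and b0: "b > 0" and b1: "b < 1" and a0: "a > 0"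
    and D0: "D > 0" and Z0: "Z > 0"
    and C0': "a * (\<alpha> + 1) = K * (1 - b)" and qb: "q - b = 2 * D / Z" and r1: "p * b / \<alpha> = 4 * p / D"
    and r2: "Mbar N p * (q - b) * (4 * p / D) powr (p / (p + 1)) = (p + 1) * b"
    using C by auto
  have qb0: "q - b > 0" using qb D0 Z0 by simp
  have q0: "q > 0" using p1 by (simp add: q_def)
  define \<beta> where "\<beta> = - b"
  define c2 where "c2 = \<alpha> / (\<beta> + 2)"
  define k where "k = - c2 * a^2"
  define i1 where "i1 = 1 / (\<beta> + 1)"
  define i2 where "i2 = 1 / (\<beta> + 2)"
  define j1 where "j1 = 1 / (\<alpha> + \<beta> + 2)"
  define j2 where "j2 = 1 / (\<alpha> + \<beta> + p + 1)"
  define j3 where "j3 = 1 / (\<alpha> + \<beta> + q + 1)"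
  have pos1: "\<beta> + 1 > 0" "\<beta> + 2 > 0" "\<alpha> + \<beta> + 2 > 0" "\<alpha> + \<beta> + p + 1 > 0" "\<alpha> + \<beta> + q + 1 > 0"
    using b1 \<alpha>0 p1 q0 by (auto simp: \<beta>_def)
  have C0: "K * (\<beta> + 1) = a * (\<alpha> + 1)" using C0' by (simp add: \<beta>_def)
  have c2e: "c2 * (\<beta> + 2) = \<alpha>" using pos1 by (simp add: c2_def)
  have ie: "i1 * (\<beta> + 1) = 1" "i2 * (\<beta> + 2) = 1" using pos1 by (auto simp: i1_def i2_def)
  have je: "j1 * (\<alpha> + \<beta> + 2) = 1" "j2 * (\<alpha> + \<beta> + p + 1) = 1" "j3 * (\<alpha> + \<beta> + q + 1) = 1"
    using pos1 by (auto simp: j1_def j2_def j3_def)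
  from co obtain T where T: "T > 0" "\<forall>t. x (t + T) = x t \<and> y (t + T) = y t"
    and sol: "solS N p M x y" and nc: "\<exists>s t. (x s, y s) \<noteq> (x t, y t)"
    unfolding closed_orbitS_def by blast
  have dx: "\<And>t. (x has_real_derivative (a * x t - y t)) (at t)"
    using sol unfolding solS_def fS_def a_def by blast
  have dy: "(y has_real_derivative (- K * y t + x t powr p + M * y t powr q)) (at t)" for t
  proof -
    have "(y has_real_derivative (- K * y t + \<bar>x t\<bar> powr (p - 1) * x t + M * \<bar>y t\<bar> powr q)) (at t)"
      using sol unfolding solS_def gS_def K_def q_def by blast
    moreover have "\<bar>x t\<bar> powr (p - 1) * x t = x t powr p" using absq_eq[of "x t" p] pos by (simp add: less_imp_le)
    moreover have "\<bar>y t\<bar> = y t" using pos by (simp add: less_imp_le)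
    ultimately show ?thesis by simp
  qed
  define hh where "hh X Y = X powr \<alpha> * Y powr \<beta> * (- c2 * Y^2 * inverse X + X powr p + M * Y powr q)" for X Y
  define hx where "hx X = a powr \<beta> * (X powr \<alpha> * X powr \<beta> * (k * X + X powr p + M * a powr q * X powr q))" for X
  have hx_eq: "hx X = hh X (a * X)" if X: "X > 0" for X
  proof -
    have ix: "X * inverse X = 1" using X by simp
    have "(a * X) powr \<beta> = a powr \<beta> * X powr \<beta>" "(a * X) powr q = a powr q * X powr q"
      using a0 X by (auto simp: powr_mult)
    then show ?thesis unfolding hx_def hh_def k_def using ix by (simp only:) algebra
  qed
  define d where "d t = (a * x t - y t) * (hh (x t) (y t) - hx (x t))" for t
  define \<phi> where "\<phi> t = x t powr \<alpha> * y t powr \<beta> * (a * x t * y t * i1 - (y t)^2 * i2)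
           - a powr \<beta> * (x t powr \<alpha> * x t powr \<beta> * (k * (x t)^2 * j1 + x t powr p * x t * j2
               + M * a powr q * x t powr q * x t * j3))" for t
  have der: "(\<phi> has_real_derivative d t) (at t)" for t
    unfolding \<phi>_def[abs_def] d_def hh_def hx_def
    by (rule Vderiv[OF _ _ a0 dx dy C0 c2e _ ie je]) (use pos k_def in auto)
  have per: "\<phi> (t + T) = \<phi> t" for t using T(2) by (simp add: \<phi>_def)
  have sdec: "hh X y2 < hh X y1" if X: "X > 0" and y: "0 < y1" "y1 < y2" for X y1 y2
  proof -
    define E where "E Y = - \<alpha> * Y * inverse X - b * X powr p * inverse Y + M * (q - b) * (Y powr q * inverse Y)" for Y
    define y0 where "y0 = sqrt (p * b * X powr (p + 1) / \<alpha>)"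
    show ?thesis
    proof (rule strict_dec[where g = "hh X" and g' = "\<lambda>Y. X powr \<alpha> * Y powr \<beta> * E Y" and yz = y0, OF _ _ y])
      fix Y :: real assume Y: "Y > 0"
      show "(hh X has_real_derivative X powr \<alpha> * Y powr \<beta> * E Y) (at Y)"
        unfolding hh_def[abs_def] E_def by (rule hderiv[OF X Y c2e \<beta>_def])
      assume ne: "Y \<noteq> y0"
      have "\<alpha> * Y^2 \<noteq> p * b * X powr (p + 1)"
      proof
        assume "\<alpha> * Y^2 = p * b * X powr (p + 1)"
        then have "Y^2 = p * b * X powr (p + 1) / \<alpha>" using \<alpha>0 by (simp add: field_simps)
        then have "y0 = sqrt (Y^2)" by (simp add: y0_def)
        then show False using ne Y by simp
      qed
      from keyineq(2)[OF X Y p1 q_def \<alpha>0 b0 D0 qb0 r1 r2 M this]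
      have "E Y < 0" unfolding E_def by (simp add: divide_inverse)
      moreover have "X powr \<alpha> * Y powr \<beta> > 0" using X Y by simp
      ultimately show "X powr \<alpha> * Y powr \<beta> * E Y < 0" by (simp add: mult_pos_neg)
    qed
  qed
  have dnn: "d t \<ge> 0 \<and> (d t = 0 \<longrightarrow> y t = a * x t)" for t
  proof -
    have X: "x t > 0" and Y: "y t > 0" using pos by auto
    have aX: "a * x t > 0" using a0 X by simp
    have hxe: "hx (x t) = hh (x t) (a * x t)" by (rule hx_eq[OF X])
    consider "y t < a * x t" | "y t = a * x t" | "y t > a * x t" by linarith
    then show ?thesis
    proof cases
      case 1
      then have "hh (x t) (a * x t) < hh (x t) (y t)" using sdec[OF X Y] by blast
      then have "d t > 0" using 1 unfolding d_def hxe by (simp add: mult_pos_pos)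
      then show ?thesis by simp
    next
      case 2 then show ?thesis unfolding d_def by simp
    next
      case 3
      then have "hh (x t) (y t) < hh (x t) (a * x t)" using sdec[OF X aX] by blast
      then have "d t > 0" using 3 unfolding d_def hxe by (simp add: mult_neg_neg)
      then show ?thesis by simp
    qed
  qed
  have d0: "d t = 0" for t
    by (rule periodic_deriv_zero[OF der _ T(1) per]) (use dnn in auto)
  have u0: "a * x t - y t = 0" for t using dnn d0 by simp
  have "\<forall>t. (x has_real_derivative 0) (at t)" using dx u0 by simp
  then have xc: "x s = x t" for s t by (rule DERIV_isconst_all)
  have yc: "y s = y t" for s t using u0[of s] u0[of t] xc[of s t] by simp
  show False using nc xc yc by auto
qed


theorem lemma3p2:
  fixes N :: nat and p M :: real
  assumes "N \<ge> 3"
  shows "(M > 0 \<and> 1 < p \<and> p \<le> (real N + 2) / (real N - 2) \<longrightarrow>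
            \<not> (\<exists>x y. closed_orbitS N p M x y \<and> (\<forall>t. x t \<ge> 0 \<and> y t \<ge> 0)))
       \<and> (p > (real N + 2) / (real N - 2) \<and> 0 < M \<and> M \<le> Mbar N p \<longrightarrow>
            \<not> (\<exists>x y. closed_orbitS N p M x y \<and> (\<forall>t. x t > 0 \<and> y t > 0)
                     \<and> surrounds (orbit_set x y) (PM N p M)))"
  using part1[OF assms] part2[OF assms] by blast

end
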